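(* Let $G$ be an equilibrium graph of a bounded budget network creation game $(b_1,\dots,b_n)$-BG in the SUM version. Let $C$ be a subset of the vertices of $G$ and let $A$ be the vertex set of a connected component of $U(G-C)$, where $G-C$ is the subgraph induced by $V(G)\setminus C$. Assume that for every $v\in A$ we have $\operatorname{dist}(v,C)=1$ and the budget of $v$ is larger than $|C|$. Then every vertex in $A$ has local diameter at most $2$.
   Context: Bounded budget network creation game $(b_1,\dots,b_n)$-BG: $n$ players with integer budgets $0\le b_i\le n-1$. A strategy of player $i$ is a set $S_i\subseteq\{1,\dots,n\}\setminus\{i\}$ with $|S_i|=b_i$; a profile is realized by the directed graph $G$ on $u_1,\dots,u_n$ with an arc $\overrightarrow{u_iu_j}$ iff $j\in S_i$; the budget of vertex $u_i$ is $b_i$. $U(G)$ is the undirected multigraph obtained by ignoring directions. $\operatorname{dist}(u,v)$ is the distance in $U(G)$, defined as $n^2$ between different components; $\operatorname{dist}(u,C)=\min_{c\in C}\operatorname{dist}(u,c)$. The local diameter of $u$ is $\max_v\operatorname{dist}(u,v)$. SUM cost: $c_{SUM}(u)=\sum_v\operatorname{dist}(u,v)$. An equilibrium graph in the SUM version is a realization in which no vertex can decrease its SUM cost by changing its own strategy while the others are fixed. *)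

theory Defs
  imports Main
begin

text \<open>Vertices u_1..u_n are represented by 0..<n. A strategy profile is
  S :: nat \<Rightarrow> nat set, S i being the set of heads of arcs owned by vertex i.\<close>

definition valid_profile :: "nat \<Rightarrow> (nat \<Rightarrow> nat) \<Rightarrow> (nat \<Rightarrow> nat set) \<Rightarrow> bool" where
  "valid_profile n b S \<longleftrightarrow> (\<forall>i<n. S i \<subseteq> {0..<n} - {i} \<and> card (S i) = b i)"

definition adj :: "nat \<Rightarrow> (nat \<Rightarrow> nat set) \<Rightarrow> nat \<Rightarrow> nat \<Rightarrow> bool" where
  "adj n S u v \<longleftrightarrow> u < n \<and> v < n \<and> (v \<in> S u \<or> u \<in> S v)"

fun walk_in :: "nat \<Rightarrow> (nat \<Rightarrow> nat set) \<Rightarrow> nat set \<Rightarrow> nat \<Rightarrow> nat \<Rightarrow> nat \<Rightarrow> bool" where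
  "walk_in n S X 0 u v \<longleftrightarrow> u = v \<and> u \<in> X"
| "walk_in n S X (Suc k) u v \<longleftrightarrow> u \<in> X \<and> (\<exists>w. adj n S u w \<and> walk_in n S X k w v)"

text \<open>Distance in U(G); n^2 between different components.\<close>
definition gdist :: "nat \<Rightarrow> (nat \<Rightarrow> nat set) \<Rightarrow> nat \<Rightarrow> nat \<Rightarrow> nat" where
  "gdist n S u v = (if \<exists>k. walk_in n S {0..<n} k u v
                    then (LEAST k. walk_in n S {0..<n} k u v) else n ^ 2)"

definition dist_to_set :: "nat \<Rightarrow> (nat \<Rightarrow> nat set) \<Rightarrow> nat \<Rightarrow> nat set \<Rightarrow> nat" where
  "dist_to_set n S u C = Min ((\<lambda>c. gdist n S u c) ` C)"

definition local_diameter :: "nat \<Rightarrow> (nat \<Rightarrow> nat set) \<Rightarrow> nat \<Rightarrow> nat" where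
  "local_diameter n S u = Max ((\<lambda>v. gdist n S u v) ` {0..<n})"

definition sum_cost :: "nat \<Rightarrow> (nat \<Rightarrow> nat set) \<Rightarrow> nat \<Rightarrow> nat" where
  "sum_cost n S u = (\<Sum>v<n. gdist n S u v)"

definition sum_equilibrium :: "nat \<Rightarrow> (nat \<Rightarrow> nat) \<Rightarrow> (nat \<Rightarrow> nat set) \<Rightarrow> bool" where
  "sum_equilibrium n b S \<longleftrightarrow> valid_profile n b S \<and>
     (\<forall>i<n. \<forall>T. T \<subseteq> {0..<n} - {i} \<and> card T = b i \<longrightarrow>
        sum_cost n S i \<le> sum_cost n (S(i := T)) i)"

definition component_of_minus :: "nat \<Rightarrow> (nat \<Rightarrow> nat set) \<Rightarrow> nat set \<Rightarrow> nat set \<Rightarrow> bool" where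
  "component_of_minus n S C A \<longleftrightarrow> A \<noteq> {} \<and> A \<subseteq> {0..<n} - C \<and>
     (\<forall>u\<in>A. \<forall>v. v \<in> A \<longleftrightarrow> (\<exists>k. walk_in n S ({0..<n} - C) k u v))"

end

theory Submission
  imports Defs
begin

lemma walk_in_X: "walk_in n S X k u w \<Longrightarrow> u \<in> X \<and> w \<in> X"
  by (induction k arbitrary: u) auto

lemma walk_append: "walk_in n S X a u w \<Longrightarrow> walk_in n S X b w z \<Longrightarrow> walk_in n S X (a+b) u z"
  by (induction a arbitrary: u) auto

lemma walk_path: "walk_in n S X k u w \<longleftrightarrow> (\<exists>p. p 0 = u \<and> p k = w \<and> (\<forall>i\<le>k. p i \<in> X) \<and> (\<forall>i<k. adj n S (p i) (p (Suc i))))"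
proof (induction k arbitrary: u)
  case 0
  show ?case
  proof
    assume "walk_in n S X 0 u w"
    then show "\<exists>p. p 0 = u \<and> p 0 = w \<and> (\<forall>i\<le>0. p i \<in> X) \<and> (\<forall>i<0. adj n S (p i) (p (Suc i)))"
      by (intro exI[of _ "\<lambda>_. u"]) auto
  qed auto
next
  case (Suc k)
  show ?case
  proof
    assume "walk_in n S X (Suc k) u w"
    then obtain w' where u: "u \<in> X" and a: "adj n S u w'" and wk: "walk_in n S X k w' w" by auto
    from wk Suc.IH obtain p where p: "p 0 = w'" "p k = w" "\<forall>i\<le>k. p i \<in> X" "\<forall>i<k. adj n S (p i) (p (Suc i))" by blast
    define q where "q = (\<lambda>i. if i = 0 then u else p (i - 1))"
    have "q 0 = u" "q (Suc k) = w" using p by (auto simp: q_def)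
    moreover have "\<forall>i\<le>Suc k. q i \<in> X" using p u by (auto simp: q_def)
    moreover have "\<forall>i<Suc k. adj n S (q i) (q (Suc i))"
    proof (intro allI impI)
      fix i assume "i < Suc k"
      then show "adj n S (q i) (q (Suc i))"
        using p a by (cases i) (auto simp: q_def)
    qed
    ultimately show "\<exists>p. p 0 = u \<and> p (Suc k) = w \<and> (\<forall>i\<le>Suc k. p i \<in> X) \<and> (\<forall>i<Suc k. adj n S (p i) (p (Suc i)))" by blast
  next
    assume "\<exists>p. p 0 = u \<and> p (Suc k) = w \<and> (\<forall>i\<le>Suc k. p i \<in> X) \<and> (\<forall>i<Suc k. adj n S (p i) (p (Suc i)))"
    then obtain p where p: "p 0 = u" "p (Suc k) = w" "\<forall>i\<le>Suc k. p i \<in> X" "\<forall>i<Suc k. adj n S (p i) (p (Suc i))" by blast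
    have "walk_in n S X k (p 1) w"
      unfolding Suc.IH by (intro exI[of _ "\<lambda>i. p (Suc i)"]) (use p in auto)
    moreover have "adj n S u (p 1)" using p by auto
    moreover have "u \<in> X" using p by auto
    ultimately show "walk_in n S X (Suc k) u w" by auto
  qed
qed

lemma walk_short:
  assumes "walk_in n S X k u w" "X \<subseteq> {0..<n}"
  shows "\<exists>k'<n. walk_in n S X k' u w"
using assms(1) proof (induction k rule: less_induct)
  case (less k)
  show ?case
  proof (cases "k < n")
    case True then show ?thesis using less.prems by blast
  next
    case False
    from less.prems obtain p where p: "p 0 = u" "p k = w" "\<forall>i\<le>k. p i \<in> X" "\<forall>i<k. adj n S (p i) (p (Suc i))"
      using walk_path by metis
    have "p ` {0..k} \<subseteq> {0..<n}" using p(3) assms(2) by auto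
    hence "card (p ` {0..k}) \<le> n" by (metis card_atLeastLessThan card_mono finite_atLeastLessThan diff_zero)
    hence "\<not> inj_on p {0..k}" using False by (auto dest: card_image)
    then obtain i j where ij: "i \<le> k" "j \<le> k" "i < j" "p i = p j"
      unfolding inj_on_def by (metis atLeastAtMost_iff linorder_neqE_nat)
    define q where "q = (\<lambda>m. if m \<le> i then p m else p (m + (j - i)))"
    have q0: "q 0 = u" using p by (simp add: q_def)
    have qe: "q (k - (j - i)) = w"
    proof (cases "k - (j - i) \<le> i")
      case True
      then have "k = j" using ij by linarith
      then show ?thesis using True ij p by (auto simp: q_def)
    next
      case False
      then show ?thesis using ij p by (auto simp: q_def)
    qed
    have qX: "\<forall>m\<le>k - (j - i). q m \<in> X" using p(3) ij by (auto simp: q_def)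
    have qa: "\<forall>m<k - (j - i). adj n S (q m) (q (Suc m))"
    proof (intro allI impI)
      fix m assume m: "m < k - (j - i)"
      consider "m < i" | "m = i" | "m > i" by linarith
      then show "adj n S (q m) (q (Suc m))"
      proof cases
        case 1 then show ?thesis using p(4) ij by (auto simp: q_def)
      next
        case 2
        then have "q m = p j" "q (Suc m) = p (Suc j)" "j < k" using ij m by (auto simp: q_def)
        then show ?thesis using p(4) by auto
      next
        case 3
        then have "q m = p (m + (j - i))" "q (Suc m) = p (Suc (m + (j - i)))" "m + (j - i) < k"
          using ij m by (auto simp: q_def)
        then show ?thesis using p(4) by auto
      qed
    qed
    have "walk_in n S X (k - (j - i)) u w"
      unfolding walk_path using q0 qe qX qa by blast
    then show ?thesis using less.IH[of "k - (j-i)"] ij by auto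
  qed
qed


lemma sum_ind: "B \<subseteq> {..<n::nat} \<Longrightarrow> (\<Sum>y<n. if y \<in> B then 1 else (0::nat)) = card B"
proof -
  assume "B \<subseteq> {..<n}"
  hence e: "{..<n} \<inter> B = B" by auto
  have "sum (\<lambda>_. 1::nat) ({..<n} \<inter> B) = (\<Sum>y<n. if y \<in> B then 1 else (0::nat))"
    using sum.inter_restrict[of "{..<n}" "\<lambda>_. (1::nat)" B] by simp
  thus ?thesis using e by simp
qed

lemma gdist_le: "walk_in n S {0..<n} k u w \<Longrightarrow> gdist n S u w \<le> k"
  unfolding gdist_def by (auto intro: Least_le)

lemma gdist_walk: "\<exists>k. walk_in n S {0..<n} k u w \<Longrightarrow> walk_in n S {0..<n} (gdist n S u w) u w"
  unfolding gdist_def by (auto intro: LeastI_ex)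

lemma gdist_bound: "gdist n S u w \<le> n^2"
proof (cases "\<exists>k. walk_in n S {0..<n} k u w")
  case True
  then obtain k where "walk_in n S {0..<n} k u w" by blast
  then obtain k' where k': "k' < n" "walk_in n S {0..<n} k' u w" using walk_short by blast
  have "gdist n S u w \<le> k'" by (rule gdist_le[OF k'(2)])
  also have "k' \<le> n^2" using k'(1) by (metis less_imp_le_nat le_trans power2_nat_le_imp_le nat_le_linear power2_eq_square le_square)
  finally show ?thesis .
next
  case False then show ?thesis unfolding gdist_def by simp
qed

lemma gdist_self: "u < n \<Longrightarrow> gdist n S u u = 0"
  using gdist_le[of n S 0 u u] by simp

lemma gdist_adj: "adj n S u w \<Longrightarrow> gdist n S u w \<le> 1"
proof -
  assume a: "adj n S u w"
  hence "walk_in n S {0..<n} 1 u w" by (auto simp: adj_def)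
  thus ?thesis by (rule gdist_le)
qed

lemma gdist_ge2:
  assumes "n \<ge> 2" "u \<noteq> w" "\<not> adj n S u w"
  shows "gdist n S u w \<ge> 2"
proof (cases "\<exists>k. walk_in n S {0..<n} k u w")
  case True
  hence wk: "walk_in n S {0..<n} (gdist n S u w) u w" by (rule gdist_walk)
  show ?thesis
  proof (rule ccontr)
    assume "\<not> ?thesis"
    then consider "gdist n S u w = 0" | "gdist n S u w = 1" by linarith
    then show False
    proof cases
      case 1 then show False using wk assms by simp
    next
      case 2 then show False using wk assms by simp
    qed
  qed
next
  case False
  then have "gdist n S u w = n^2" unfolding gdist_def by simp
  moreover have "n^2 \<ge> 2*2" using assms(1) by (metis power2_eq_square mult_le_mono)
  ultimately show ?thesis by simp
qed

lemma gdist_ge1: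
  assumes "n \<ge> 2" "u \<noteq> w"
  shows "gdist n S u w \<ge> 1"
proof (cases "\<exists>k. walk_in n S {0..<n} k u w")
  case True
  hence wk: "walk_in n S {0..<n} (gdist n S u w) u w" by (rule gdist_walk)
  show ?thesis
  proof (rule ccontr)
    assume "\<not> ?thesis"
    then have "gdist n S u w = 0" by linarith
    then show False using wk assms by simp
  qed
next
  case False
  then have "gdist n S u w = n^2" unfolding gdist_def by simp
  moreover have "n^2 \<ge> 2*2" using assms(1) by (metis power2_eq_square mult_le_mono)
  ultimately show ?thesis by simp
qed

lemma gdist_1_adj:
  assumes "n \<ge> 2" "gdist n S u w = 1"
  shows "adj n S u w"
proof (cases "\<exists>k. walk_in n S {0..<n} k u w")
  case True
  hence wk: "walk_in n S {0..<n} (gdist n S u w) u w" by (rule gdist_walk)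
  then show ?thesis using assms by simp
next
  case False
  then have "gdist n S u w = n^2" unfolding gdist_def by simp
  moreover have "n^2 \<ge> 2*2" using assms(1) by (metis power2_eq_square mult_le_mono)
  ultimately show ?thesis using assms by simp
qed

theorem mainTheorem19:
  fixes n :: nat and b :: "nat \<Rightarrow> nat" and S :: "nat \<Rightarrow> nat set"
    and C A :: "nat set"
  assumes eq: "sum_equilibrium n b S"
    and C: "C \<subseteq> {0..<n}"
    and A: "component_of_minus n S C A"
    and Cne: "C \<noteq> {}"
    and distC: "\<forall>v\<in>A. dist_to_set n S v C = 1"
    and budget: "\<forall>v\<in>A. b v > card C"
  shows "\<forall>v\<in>A. local_diameter n S v \<le> 2"
proof
  fix v assume vA: "v \<in> A"
  have Asub: "A \<subseteq> {0..<n} - C" using A unfolding component_of_minus_def by auto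
  have vn: "v < n" "v \<notin> C" using Asub vA by auto
  obtain c0 where c0: "c0 \<in> C" using Cne by auto
  have "c0 < n" "c0 \<noteq> v" using c0 C vn by auto
  hence n2: "n \<ge> 2" using vn by linarith
  have finC: "finite C" using C finite_subset by blast
  have valid: "valid_profile n b S" and eqc: "\<forall>i<n. \<forall>T. T \<subseteq> {0..<n} - {i} \<and> card T = b i \<longrightarrow>
        sum_cost n S i \<le> sum_cost n (S(i := T)) i"
    using eq unfolding sum_equilibrium_def by auto
  have Sv: "S v \<subseteq> {0..<n} - {v}" "card (S v) = b v" using valid vn unfolding valid_profile_def by auto
  have finSv: "finite (S v)" using Sv(1) finite_subset by blast
  have nbrA: "w \<in> A" if "u \<in> A" "adj n S u w" "w \<notin> C" for u w
  proof -
    have "u \<in> {0..<n} - C" using that Asub by auto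
    moreover have "w \<in> {0..<n} - C" using that unfolding adj_def by auto
    ultimately have "walk_in n S ({0..<n} - C) 1 u w" using that by auto
    then show ?thesis using A that(1) unfolding component_of_minus_def by blast
  qed
  have Cnbr: "\<exists>c\<in>C. adj n S y c" if "y \<in> A" for y
  proof -
    have "Min ((\<lambda>c. gdist n S y c) ` C) = 1" using distC that unfolding dist_to_set_def by auto
    moreover have "Min ((\<lambda>c. gdist n S y c) ` C) \<in> (\<lambda>c. gdist n S y c) ` C"
      using finC Cne by (intro Min_in) auto
    ultimately obtain c where "c \<in> C" "gdist n S y c = 1" by auto
    then show ?thesis using gdist_1_adj[OF n2] by blast
  qed
  show "local_diameter n S v \<le> 2"
  proof (rule ccontr)
    assume "\<not> ?thesis"
    then obtain x where x: "x < n" "gdist n S v x \<ge> 3"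
      unfolding local_diameter_def using vn by (auto simp: Max_le_iff not_le)
    have xv: "x \<noteq> v" using x gdist_self[OF vn(1), of S] by auto
    have xS: "x \<notin> S v"
    proof
      assume "x \<in> S v"
      hence "adj n S v x" using vn x unfolding adj_def by auto
      thus False using gdist_adj x by fastforce
    qed
    define K where "K = {c \<in> C. v \<notin> S c}"
    have KC: "K \<subseteq> C" by (auto simp: K_def)
    have finK: "finite K" using finC KC finite_subset by blast
    have cK: "card K \<le> card C" using KC finC card_mono by blast
    have cxK: "card (insert x K) \<le> card K + 1" using finK by (simp add: card_insert_if)
    have bv: "b v > card C" using budget vA by auto
    have "card (S v - K) = card (S v) - card (S v \<inter> K)" using finSv by (simp add: card_Diff_subset_Int)
    moreover have "card (S v \<inter> K) \<le> card K" using finK by (simp add: card_mono)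
    moreover have "card K \<le> card (insert x K)" using finK by (simp add: card_insert_if)
    ultimately have "b v - card (insert x K) \<le> card (S v - K)" using Sv(2) cK cxK by linarith
    then obtain R where R: "R \<subseteq> S v - K" "card R = b v - card (insert x K)"
      by (meson obtain_subset_with_card_n)
    define T where "T = insert x K \<union> R"
    define S' where "S' = S(v := T)"
    have finR: "finite R" using R(1) finSv finite_subset by blast
    have Tsub: "T \<subseteq> {0..<n} - {v}" using R(1) Sv(1) x xv KC C vn unfolding T_def by auto
    have disj: "insert x K \<inter> R = {}" using R(1) xS by auto
    have cT: "card T = b v" unfolding T_def using card_Un_disjoint[OF _ finR disj] finK cxK cK bv R(2)
      by simp
    have cost: "sum_cost n S v \<le> sum_cost n S' v" using eqc vn Tsub cT unfolding S'_def by blast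
    define D where "D = S v - T"
    define G0 where "G0 = insert x (K - S v)"
    have cardD: "card D = card G0"
    proof -
      have e1: "S v = D \<union> (R \<union> (S v \<inter> K))" using R(1) xS unfolding D_def T_def by auto
      have fD: "finite D" using finSv unfolding D_def by auto
      have fSK: "finite (S v \<inter> K)" using finK by auto
      have d1: "D \<inter> (R \<union> (S v \<inter> K)) = {}" unfolding D_def T_def by auto
      have d2: "R \<inter> (S v \<inter> K) = {}" using R(1) by auto
      have "card (D \<union> (R \<union> (S v \<inter> K))) = card D + (card R + card (S v \<inter> K))"
        using card_Un_disjoint[OF fD _ d1] card_Un_disjoint[OF finR fSK d2] finR fSK by simp
      then have c1: "card (S v) = card D + (card R + card (S v \<inter> K))" by (metis e1)
      have e2: "insert x K = G0 \<union> (S v \<inter> K)" unfolding G0_def by auto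
      have c2: "card (insert x K) = card G0 + card (S v \<inter> K)"
        unfolding e2 using finK xS unfolding G0_def by (subst card_Un_disjoint) auto
      show ?thesis using c1 c2 Sv(2) R(2) cxK cK bv by linarith
    qed
    have S'o: "S' a = S a" if "a \<noteq> v" for a using that unfolding S'_def by simp
    have adjo: "adj n S' a c = adj n S a c" if "a \<noteq> v" "c \<noteq> v" for a c
      using that S'o unfolding adj_def by auto
    have adjT: "adj n S' v w" if "w \<in> T" for w
      using that Tsub vn unfolding adj_def S'_def by auto
    have adjC: "adj n S' v c" if "c \<in> C" for c
    proof (cases "c \<in> K")
      case True then show ?thesis using adjT unfolding T_def by auto
    next
      case False
      then have "v \<in> S c" "c \<noteq> v" using that vn unfolding K_def by auto
      then show ?thesis using that C vn S'o unfolding adj_def by auto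
    qed
    have adjkeep: "adj n S' v y" if "adj n S v y" "y \<notin> D" for y
    proof -
      have "y \<in> S v \<or> v \<in> S y" using that unfolding adj_def by auto
      then show ?thesis
      proof
        assume "y \<in> S v" then have "y \<in> T" using that unfolding D_def by auto
        then show ?thesis by (rule adjT)
      next
        assume a: "v \<in> S y"
        then have "y \<noteq> v" using Sv(1) by auto
        then show ?thesis using a that(1) S'o unfolding adj_def by auto
      qed
    qed
    have DS: "D \<subseteq> S v" unfolding D_def by auto
    have point: "gdist n S' v y + (if y \<in> G0 then 1 else 0) + (if y = x then 1 else 0)
                 \<le> gdist n S v y + (if y \<in> D then 1 else 0)" if yn: "y < n" for y
    proof -
      consider "y = x" | "y \<noteq> x" "y \<in> K - S v" | "y \<notin> G0" unfolding G0_def by auto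
      then show ?thesis
      proof cases
        case 1
        have "gdist n S' v x \<le> 1" using adjT gdist_adj unfolding T_def by blast
        moreover have "x \<in> G0" "x \<notin> D" using xS DS unfolding G0_def by auto
        ultimately show ?thesis using 1 x by auto
      next
        case 2
        have "gdist n S' v y \<le> 1" using adjC gdist_adj 2 KC by blast
        moreover have "y \<in> G0" "y \<notin> D" using 2 DS unfolding G0_def by auto
        moreover have "gdist n S v y \<ge> 2"
        proof (rule gdist_ge2[OF n2])
          show "v \<noteq> y" using 2 KC vn by auto
          show "\<not> adj n S v y" using 2 unfolding K_def adj_def by auto
        qed
        ultimately show ?thesis using 2 by auto
      next
        case 3
        then have yx: "y \<noteq> x" unfolding G0_def by auto
        have "gdist n S' v y \<le> gdist n S v y + (if y \<in> D then 1 else 0)"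
        proof -
          consider "y = v" | "y \<noteq> v" "y \<in> C" | "y \<noteq> v" "y \<in> A" | "y \<noteq> v" "y \<notin> C" "y \<notin> A" by blast
          then show ?thesis
          proof cases
            case 1 then show ?thesis using gdist_self vn by simp
          next
            case 2
            have "gdist n S' v y \<le> 1" using adjC gdist_adj 2 by blast
            moreover have "gdist n S v y \<ge> 1" using gdist_ge1[OF n2] 2 by auto
            ultimately show ?thesis by simp
          next
            case 3
            obtain c where c: "c \<in> C" "adj n S y c" using Cnbr 3 by blast
            have cv: "c \<noteq> v" using c vn by auto
            have "adj n S' c y" using adjo[of c y] c 3 cv unfolding adj_def by auto
            moreover have "adj n S' v c" using adjC c by blast
            ultimately have ww: "adj n S' c y" "adj n S' v c" by auto
            have w1: "walk_in n S' {0..<n} (Suc 0) c y" using ww(1) c C yn by auto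
            have "walk_in n S' {0..<n} (Suc (Suc 0)) v y"
              using walk_in.simps(2)[of n S' "{0..<n}" "Suc 0" v y] w1 ww(2) vn by auto
            then have "walk_in n S' {0..<n} 2 v y" by (simp add: numeral_2_eq_2)
            then have d2: "gdist n S' v y \<le> 2" by (rule gdist_le)
            show ?thesis
            proof (cases "y \<in> D")
              case True then show ?thesis using d2 gdist_ge1[OF n2, of v y S] 3 by auto
            next
              case False
              show ?thesis
              proof (cases "adj n S v y")
                case True
                then have "gdist n S' v y \<le> 1" using adjkeep False gdist_adj by blast
                then show ?thesis using gdist_ge1[OF n2, of v y S] 3 by auto
              next
                case nadj: False
                then show ?thesis using d2 gdist_ge2[OF n2, of v y S] 3 by auto
              qed
            qed
          next
            case 4
            show ?thesis
            proof (cases "\<exists>k. walk_in n S {0..<n} k v y")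
              case False
              then have "gdist n S v y = n^2" unfolding gdist_def by simp
              then show ?thesis using gdist_bound[of n S' v y] by simp
            next
              case True
              define k where "k = gdist n S v y"
              have "walk_in n S {0..<n} k v y" unfolding k_def using gdist_walk[OF True] .
              then obtain p where p: "p 0 = v" "p k = y" "\<forall>i\<le>k. p i \<in> {0..<n}"
                "\<forall>i<k. adj n S (p i) (p (Suc i))" unfolding walk_path by blast
              define J where "J = {m. m \<le> k \<and> p m = v}"
              have finJ: "finite J" unfolding J_def by auto
              have "0 \<in> J" using p unfolding J_def by auto
              define j where "j = Max J"
              have jJ: "j \<in> J" using finJ \<open>0 \<in> J\<close> unfolding j_def by (intro Max_in) auto
              have jk: "j < k" using jJ p 4 unfolding J_def by (cases "j = k") auto
              have pj: "p j = v" using jJ unfolding J_def by auto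
              have after: "p m \<noteq> v" if "j < m" "m \<le> k" for m
              proof
                assume "p m = v"
                then have "m \<in> J" using that unfolding J_def by auto
                then have "m \<le> j" using finJ unfolding j_def by auto
                then show False using that by auto
              qed
              have "\<exists>i. j < i \<and> i \<le> k \<and> p i \<in> C"
              proof (rule ccontr)
                assume "\<not> ?thesis"
                then have nC: "p i \<notin> C" if "j < i" "i \<le> k" for i using that by auto
                have allA: "j + 1 + m \<le> k \<longrightarrow> p (j + 1 + m) \<in> A" for m
                proof (induction m)
                  case 0
                  show ?case
                  proof
                    assume "j + 1 + 0 \<le> k"
                    then have "adj n S (p j) (p (Suc j))" "p (Suc j) \<notin> C" using p(4) nC jk
                      by auto
                    then show "p (j + 1 + 0) \<in> A" using nbrA vA pj by auto
                  qed
                next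
                  case (Suc m)
                  show ?case
                  proof
                    assume a: "j + 1 + Suc m \<le> k"
                    then have "adj n S (p (j+1+m)) (p (Suc (j+1+m)))" "p (Suc (j+1+m)) \<notin> C"
                      using p(4) nC by auto
                    moreover have "p (j+1+m) \<in> A" using Suc a by auto
                    ultimately show "p (j + 1 + Suc m) \<in> A" using nbrA by auto
                  qed
                qed
                have "p (j + 1 + (k - j - 1)) \<in> A" using allA[of "k - j - 1"] jk by auto
                moreover have "j + 1 + (k - j - 1) = k" using jk by auto
                ultimately show False using p(2) 4 by auto
              qed
              then obtain i where i: "j < i" "i \<le> k" "p i \<in> C" by blast
              have h3: "\<forall>m\<le>k - i. p (i + m) \<in> {0..<n}" using p(3) i by auto
              have h4: "\<forall>m<k - i. adj n S' (p (i + m)) (p (Suc (i + m)))"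
              proof (intro allI impI)
                fix m assume m: "m < k - i"
                have "adj n S (p (i + m)) (p (Suc (i + m)))" using p(4) m by auto
                moreover have "p (i + m) \<noteq> v" "p (Suc (i + m)) \<noteq> v" using after i m by auto
                ultimately show "adj n S' (p (i + m)) (p (Suc (i + m)))" using adjo by auto
              qed
              have "walk_in n S' {0..<n} (k - i) (p i) y"
                unfolding walk_path using h3 h4 i p(2)
                by (intro exI[of _ "\<lambda>m. p (i + m)"]) auto
              moreover have "adj n S' v (p i)" using adjC i by blast
              ultimately have "walk_in n S' {0..<n} (Suc (k - i)) v y" using vn by auto
              then have "gdist n S' v y \<le> Suc (k - i)" by (rule gdist_le)
              also have "\<dots> \<le> k" using i jk by auto
              finally show ?thesis unfolding k_def by simp
            qed
          qed
        qed
        then show ?thesis using 3 yx by auto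
      qed
    qed
    have "(\<Sum>y<n. gdist n S' v y + (if y \<in> G0 then 1 else 0) + (if y = x then 1 else 0))
          \<le> (\<Sum>y<n. gdist n S v y + (if y \<in> D then 1 else 0))"
      by (rule sum_mono) (use point in auto)
    moreover have "G0 \<subseteq> {..<n}" using x KC C unfolding G0_def by auto
    moreover have "D \<subseteq> {..<n}" using DS Sv(1) by auto
    moreover have "(\<Sum>y<n. if y = x then 1 else (0::nat)) = 1" using x by simp
    ultimately have "sum_cost n S' v + card G0 + 1 \<le> sum_cost n S v + card D"
      unfolding sum_cost_def by (simp add: sum.distrib sum_ind)
    then show False using cost cardD by linarith
  qed
qed

end
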